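(* Let $G$ be a finite connected chordal graph. Then its center $C(G)$ is a diameter certificate of $G$, i.e. for every vertex $u$, $\min_{c\in C(G)}(d(u,c)+e(c))\le\operatorname{diam}(G)$.
   Context: A graph is chordal if every induced cycle of length at least 4 has a chord. $d$ shortest-path distance, $e(v)=\max_u d(v,u)$, $\operatorname{rad}(G)=\min_v e(v)$, $\operatorname{diam}(G)=\max_v e(v)$, $C(G)=\{c: e(c)=\operatorname{rad}(G)\}$. *)

theory Defs
  imports Main
begin

definition graph :: "'a set \<Rightarrow> ('a \<Rightarrow> 'a \<Rightarrow> bool) \<Rightarrow> bool" where
  "graph V E \<longleftrightarrow> (\<forall>x y. E x y \<longrightarrow> x \<in> V \<and> y \<in> V) \<and> (\<forall>x y. E x y \<longrightarrow> E y x) \<and> (\<forall>x. \<not> E x x)"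

definition walk :: "'a set \<Rightarrow> ('a \<Rightarrow> 'a \<Rightarrow> bool) \<Rightarrow> 'a list \<Rightarrow> bool" where
  "walk V E p \<longleftrightarrow> p \<noteq> [] \<and> set p \<subseteq> V \<and> (\<forall>i. Suc i < length p \<longrightarrow> E (p ! i) (p ! Suc i))"

definition connected_graph :: "'a set \<Rightarrow> ('a \<Rightarrow> 'a \<Rightarrow> bool) \<Rightarrow> bool" where
  "connected_graph V E \<longleftrightarrow> V \<noteq> {} \<and>
     (\<forall>u\<in>V. \<forall>v\<in>V. \<exists>p. walk V E p \<and> hd p = u \<and> last p = v)"

definition dist :: "'a set \<Rightarrow> ('a \<Rightarrow> 'a \<Rightarrow> bool) \<Rightarrow> 'a \<Rightarrow> 'a \<Rightarrow> nat" where
  "dist V E u v = (LEAST n. \<exists>p. walk V E p \<and> hd p = u \<and> last p = v \<and> length p = Suc n)"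

definition ecc :: "'a set \<Rightarrow> ('a \<Rightarrow> 'a \<Rightarrow> bool) \<Rightarrow> 'a \<Rightarrow> nat" where
  "ecc V E v = Max ((\<lambda>u. dist V E v u) ` V)"

definition rad :: "'a set \<Rightarrow> ('a \<Rightarrow> 'a \<Rightarrow> bool) \<Rightarrow> nat" where
  "rad V E = Min (ecc V E ` V)"

definition diam :: "'a set \<Rightarrow> ('a \<Rightarrow> 'a \<Rightarrow> bool) \<Rightarrow> nat" where
  "diam V E = Max (ecc V E ` V)"

definition center :: "'a set \<Rightarrow> ('a \<Rightarrow> 'a \<Rightarrow> bool) \<Rightarrow> 'a set" where
  "center V E = {c \<in> V. ecc V E c = rad V E}"

definition induced_cycle :: "'a set \<Rightarrow> ('a \<Rightarrow> 'a \<Rightarrow> bool) \<Rightarrow> 'a list \<Rightarrow> bool" where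
  "induced_cycle V E cs \<longleftrightarrow> distinct cs \<and> set cs \<subseteq> V \<and>
     (\<forall>i<length cs. \<forall>j<length cs.
        E (cs ! i) (cs ! j) \<longleftrightarrow> (j = Suc i mod length cs \<or> i = Suc j mod length cs))"

definition chordal :: "'a set \<Rightarrow> ('a \<Rightarrow> 'a \<Rightarrow> bool) \<Rightarrow> bool" where
  "chordal V E \<longleftrightarrow> \<not> (\<exists>cs. length cs \<ge> 4 \<and> induced_cycle V E cs)"

end

theory Submission
  imports Defs
begin

lemma walk_single: "x \<in> V \<Longrightarrow> walk V E [x]"
  by (simp add: walk_def)

lemma walk_Cons: "walk V E (x # y # p) \<longleftrightarrow> x \<in> V \<and> E x y \<and> walk V E (y # p)"
proof -
  have "(\<forall>i. Suc i < length (x # y # p) \<longrightarrow> E ((x # y # p) ! i) ((x # y # p) ! Suc i))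
     \<longleftrightarrow> E x y \<and> (\<forall>i. Suc i < length (y # p) \<longrightarrow> E ((y # p) ! i) ((y # p) ! Suc i))"
    (is "?L \<longleftrightarrow> ?R")
  proof
    assume ?L
    then show ?R by (metis Suc_less_eq length_Cons nth_Cons_0 nth_Cons_Suc zero_less_Suc)
  next
    assume R: ?R
    show ?L
    proof (intro allI impI)
      fix i assume "Suc i < length (x # y # p)"
      then show "E ((x # y # p) ! i) ((x # y # p) ! Suc i)"
        using R by (cases i) auto
    qed
  qed
  then show ?thesis by (auto simp: walk_def)
qed

lemma walk_mono: "walk V E p \<Longrightarrow> set p \<subseteq> W \<Longrightarrow> walk W E p"
  by (simp add: walk_def)

lemma walk_append:
  assumes "walk V E p" "walk V E q" "last p = hd q"
  shows "walk V E (p @ tl q)"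
  using assms
proof (induction p)
  case Nil then show ?case by (simp add: walk_def)
next
  case (Cons x p)
  show ?case
  proof (cases p)
    case Nil
    with Cons show ?thesis by (cases q) (auto simp: walk_def)
  next
    case (Cons y p')
    with Cons.prems have "walk V E p" "x \<in> V" "E x y" by (auto simp: walk_Cons)
    with Cons.IH[OF this(1)] Cons.prems Cons show ?thesis
      by (auto simp: walk_Cons)
  qed
qed

lemma walk_rev: "walk V E p \<Longrightarrow> (\<And>x y. E x y \<Longrightarrow> E y x) \<Longrightarrow> walk V E (rev p)"
proof (induction p rule: induct_list012)
  case 1 then show ?case by (simp add: walk_def)
next
  case (2 x) then show ?case by (simp add: walk_def)
next
  case (3 x y p)
  then have w: "walk V E (rev (y # p))" "x \<in> V" "E y x" by (auto simp: walk_Cons)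
  have "walk V E [y, x]" using w 3(1) by (auto simp: walk_def)
  from walk_append[OF w(1) this] show ?case by simp
qed

lemma walk_take: "walk V E p \<Longrightarrow> 0 < n \<Longrightarrow> walk V E (take n p)"
  unfolding walk_def by (auto dest: in_set_takeD)

lemma walk_drop: "walk V E p \<Longrightarrow> n < length p \<Longrightarrow> walk V E (drop n p)"
  unfolding walk_def by (auto dest: in_set_dropD)

definition reach :: "'a set \<Rightarrow> ('a \<Rightarrow> 'a \<Rightarrow> bool) \<Rightarrow> 'a \<Rightarrow> 'a \<Rightarrow> bool" where
  "reach S E x y \<longleftrightarrow> (\<exists>p. walk S E p \<and> hd p = x \<and> last p = y)"

lemma dist_le:
  assumes "walk S E p" "hd p = x" "last p = y"
  shows "dist S E x y \<le> length p - 1"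
proof -
  have "p \<noteq> []" using assms(1) by (simp add: walk_def)
  then have "length p = Suc (length p - 1)" by simp
  then show ?thesis unfolding dist_def using assms by (intro Least_le) blast
qed

lemma dist_walk:
  assumes "reach S E x y"
  shows "\<exists>p. walk S E p \<and> hd p = x \<and> last p = y \<and> length p = Suc (dist S E x y)"
proof -
  obtain p where p: "walk S E p" "hd p = x" "last p = y" using assms by (auto simp: reach_def)
  then have "p \<noteq> []" by (simp add: walk_def)
  then have "\<exists>n p. walk S E p \<and> hd p = x \<and> last p = y \<and> length p = Suc n"
    using p by (intro exI[of _ "length p - 1"] exI[of _ p]) auto
  then show ?thesis unfolding dist_def by (rule LeastI_ex)
qed

lemma reach_refl: "x \<in> S \<Longrightarrow> reach S E x x"
  unfolding reach_def by (intro exI[of _ "[x]"]) (simp add: walk_single)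

lemma dist_refl: "x \<in> S \<Longrightarrow> dist S E x x = 0"
  using dist_le[of S E "[x]" x x] by (simp add: walk_single)

lemma reach_sym: "reach S E x y \<Longrightarrow> (\<And>x y. E x y \<Longrightarrow> E y x) \<Longrightarrow> reach S E y x"
proof -
  assume r: "reach S E x y" and s: "\<And>x y. E x y \<Longrightarrow> E y x"
  from r obtain p where p: "walk S E p" "hd p = x" "last p = y" by (auto simp: reach_def)
  have "walk S E (rev p)" using walk_rev[OF p(1) s] .
  then show ?thesis using p unfolding reach_def by (intro exI[of _ "rev p"]) (auto simp: hd_rev last_rev)
qed

lemma dist_sym_le: "reach S E x y \<Longrightarrow> (\<And>x y. E x y \<Longrightarrow> E y x) \<Longrightarrow> dist S E y x \<le> dist S E x y"
proof -
  assume r: "reach S E x y" and s: "\<And>x y. E x y \<Longrightarrow> E y x"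
  obtain p where p: "walk S E p" "hd p = x" "last p = y" "length p = Suc (dist S E x y)"
    using dist_walk[OF r] by blast
  have "dist S E y x \<le> length (rev p) - 1"
    using p walk_rev[OF p(1) s] by (intro dist_le) (auto simp: hd_rev last_rev)
  with p show ?thesis by simp
qed

lemma dist_sym: "reach S E x y \<Longrightarrow> (\<And>x y. E x y \<Longrightarrow> E y x) \<Longrightarrow> dist S E y x = dist S E x y"
proof -
  assume r: "reach S E x y" and s: "\<And>x y. E x y \<Longrightarrow> E y x"
  have "reach S E y x" by (rule reach_sym[OF r s])
  from dist_sym_le[OF r s] dist_sym_le[OF this s] show ?thesis by simp
qed

lemma walk_nonempty: "walk S E p \<Longrightarrow> p \<noteq> []"
  by (simp add: walk_def)

lemma hd_append_tl: "p \<noteq> [] \<Longrightarrow> hd (p @ tl q) = hd p" by simp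
lemma last_append_tl: "q \<noteq> [] \<Longrightarrow> last p = hd q \<Longrightarrow> p \<noteq> [] \<Longrightarrow> last (p @ tl q) = last q"
  by (cases q) (auto simp: last_append)

lemma reach_trans: "reach S E x y \<Longrightarrow> reach S E y z \<Longrightarrow> reach S E x z"
proof -
  assume "reach S E x y" "reach S E y z"
  then obtain p q where p: "walk S E p" "hd p = x" "last p = y" and q: "walk S E q" "hd q = y" "last q = z"
    by (auto simp: reach_def)
  have "walk S E (p @ tl q)" using walk_append[OF p(1) q(1)] p q by simp
  moreover have "p \<noteq> []" "q \<noteq> []" using p q walk_nonempty by auto
  ultimately show ?thesis unfolding reach_def using p q
    by (intro exI[of _ "p @ tl q"]) (simp add: last_append_tl)
qed

lemma dist_triangle:
  assumes "reach S E x y" "reach S E y z"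
  shows "dist S E x z \<le> dist S E x y + dist S E y z"
proof -
  obtain p where p: "walk S E p" "hd p = x" "last p = y" "length p = Suc (dist S E x y)"
    using dist_walk[OF assms(1)] by blast
  obtain q where q: "walk S E q" "hd q = y" "last q = z" "length q = Suc (dist S E y z)"
    using dist_walk[OF assms(2)] by blast
  have w: "walk S E (p @ tl q)" using p q walk_append by metis
  have "dist S E x z \<le> length (p @ tl q) - 1"
  proof (rule dist_le[OF w])
    have "p \<noteq> []" "q \<noteq> []" using p(1) q(1) walk_nonempty by auto
    then show "hd (p @ tl q) = x" "last (p @ tl q) = z" using p q by (auto simp: last_append_tl)
  qed
  then show ?thesis using p q by simp
qed

lemma reach_edge: "x \<in> S \<Longrightarrow> y \<in> S \<Longrightarrow> E x y \<Longrightarrow> reach S E x y"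
  unfolding reach_def by (intro exI[of _ "[x,y]"]) (simp add: walk_Cons walk_single)

lemma dist_edge: "x \<in> S \<Longrightarrow> y \<in> S \<Longrightarrow> E x y \<Longrightarrow> dist S E x y \<le> 1"
  using dist_le[of S E "[x,y]" x y] by (simp add: walk_Cons walk_single)

lemma dist_0: "reach S E x y \<Longrightarrow> dist S E x y = 0 \<Longrightarrow> x = y"
proof -
  assume "reach S E x y" "dist S E x y = 0"
  then obtain p where "walk S E p" "hd p = x" "last p = y" "length p = 1"
    using dist_walk by fastforce
  then show ?thesis by (cases p) auto
qed

lemma reach_in: "reach S E x y \<Longrightarrow> x \<in> S \<and> y \<in> S"
proof -
  assume "reach S E x y"
  then obtain p where p: "walk S E p" "hd p = x" "last p = y" by (auto simp: reach_def)
  then have "p \<noteq> []" "set p \<subseteq> S" by (auto simp: walk_def)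
  then show ?thesis using p hd_in_set last_in_set by blast
qed

lemma walk_sub:
  assumes "walk S E p" "i \<le> j" "j < length p"
  shows "walk S E (take (Suc j - i) (drop i p))" "hd (take (Suc j - i) (drop i p)) = p ! i"
    "last (take (Suc j - i) (drop i p)) = p ! j" "length (take (Suc j - i) (drop i p)) = Suc j - i"
proof -
  show "walk S E (take (Suc j - i) (drop i p))" using assms
    by (intro walk_take walk_drop) auto
  show "hd (take (Suc j - i) (drop i p)) = p ! i" using assms
    by (simp add: hd_drop_conv_nth)
  show "last (take (Suc j - i) (drop i p)) = p ! j" using assms
    by (simp add: last_conv_nth nth_take)
  show "length (take (Suc j - i) (drop i p)) = Suc j - i" using assms by simp
qed

lemma reach_sub: "walk S E p \<Longrightarrow> i < length p \<Longrightarrow> j < length p \<Longrightarrow> i \<le> j \<Longrightarrow> reach S E (p!i) (p!j)"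
proof -
  assume a: "walk S E p" "i < length p" "j < length p" "i \<le> j"
  note w = walk_sub[OF a(1) a(4) a(3)]
  show ?thesis unfolding reach_def by (rule exI[of _ "take (Suc j - i) (drop i p)"]) (use w in simp)
qed

lemma dist_sub: "walk S E p \<Longrightarrow> i \<le> j \<Longrightarrow> j < length p \<Longrightarrow> dist S E (p!i) (p!j) \<le> j - i"
proof -
  assume a: "walk S E p" "i \<le> j" "j < length p"
  have "dist S E (p!i) (p!j) \<le> length (take (Suc j - i) (drop i p)) - 1"
    by (rule dist_le[OF walk_sub(1-3)[OF a]])
  then show ?thesis using a by simp
qed

lemma last_take_Suc: "i < length p \<Longrightarrow> last (take (Suc i) p) = p ! i"
  by (simp add: take_Suc_conv_app_nth)

lemma last_nth_len: "Suc j = length p \<Longrightarrow> last p = p ! j"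
proof -
  assume a: "Suc j = length p"
  then have "p \<noteq> []" by auto
  then have "last p = p ! (length p - 1)" by (rule last_conv_nth)
  then show ?thesis using a by (metis diff_Suc_1)
qed

lemma walk_shortcut:
  assumes w: "walk S E p" and ij: "i < j" "j < length p" and e: "E (p!i) (p!j)"
  shows "walk S E (take (Suc i) p @ drop j p)"
proof -
  have w1: "walk S E (take (Suc i) p)" using w by (rule walk_take) simp
  have l1: "last (take (Suc i) p) = p ! i" using ij by (simp add: last_take_Suc)
  have dj: "drop j p = p!j # drop (Suc j) p" using ij by (simp add: Cons_nth_drop_Suc)
  have w2: "walk S E (drop j p)" using w ij by (intro walk_drop) auto
  have iS: "p ! i \<in> S" using w ij unfolding walk_def by auto
  have w3: "walk S E (p!i # drop j p)" using w2 iS e dj by (simp add: walk_Cons)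
  from walk_append[OF w1 w3] l1 show ?thesis by simp
qed

lemma walk_shortcut_eq:
  assumes w: "walk S E p" and ij: "i < j" "j < length p" and e: "p!i = p!j"
  shows "walk S E (take (Suc i) p @ drop (Suc j) p)"
proof -
  have w1: "walk S E (take (Suc i) p)" using w by (rule walk_take) simp
  have l1: "last (take (Suc i) p) = p ! i" using ij by (simp add: last_take_Suc)
  have w2: "walk S E (drop j p)" using w ij by (intro walk_drop) auto
  have h2: "hd (drop j p) = p ! j" using ij by (simp add: hd_drop_conv_nth)
  from walk_append[OF w1 w2] l1 h2 e have "walk S E (take (Suc i) p @ tl (drop j p))" by simp
  then show ?thesis by (simp add: drop_Suc tl_drop)
qed

definition geo :: "'a set \<Rightarrow> ('a \<Rightarrow> 'a \<Rightarrow> bool) \<Rightarrow> 'a list \<Rightarrow> bool" where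
  "geo S E p \<longleftrightarrow> walk S E p \<and> length p = Suc (dist S E (hd p) (last p))"

lemma geo_exists: "reach S E x y \<Longrightarrow> \<exists>p. geo S E p \<and> hd p = x \<and> last p = y"
  unfolding geo_def using dist_walk by fastforce

lemma geo_noshort:
  assumes g: "geo S E p" and ij: "Suc i < j" "j < length p"
  shows "\<not> E (p!i) (p!j)"
proof
  assume e: "E (p!i) (p!j)"
  have w: "walk S E p" and l: "length p = Suc (dist S E (hd p) (last p))" using g by (auto simp: geo_def)
  let ?q = "take (Suc i) p @ drop j p"
  have wq: "walk S E ?q" using walk_shortcut[OF w _ ij(2) e] ij by simp
  have "p \<noteq> []" using w walk_nonempty by auto
  have hq: "hd ?q = hd p" using ij by (cases p) auto
  have lq: "last ?q = last p" using ij by (simp add: last_append)  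
  have "dist S E (hd p) (last p) \<le> length ?q - 1" using dist_le[OF wq hq lq] .
  moreover have "length ?q = Suc i + (length p - j)" using ij by simp
  ultimately show False using l ij by linarith
qed

lemma geo_distinct:
  assumes g: "geo S E p" and ij: "i < j" "j < length p"
  shows "p!i \<noteq> p!j"
proof
  assume e: "p!i = p!j"
  have w: "walk S E p" and l: "length p = Suc (dist S E (hd p) (last p))" using g by (auto simp: geo_def)
  let ?q = "take (Suc i) p @ drop (Suc j) p"
  have wq: "walk S E ?q" using walk_shortcut_eq[OF w ij e] .
  have hq: "hd ?q = hd p" using ij by (cases p) auto
  have lq: "last ?q = last p"
  proof (cases "Suc j < length p")
    case True then show ?thesis by (simp add: last_append)
  next
    case False
    then have "Suc j = length p" using ij by simp
    then have "last p = p ! j" by (rule last_nth_len)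
    moreover have "last (take (Suc i) p) = p ! i" using ij by (simp add: last_take_Suc)
    ultimately show ?thesis using False e by simp
  qed
  have "dist S E (hd p) (last p) \<le> length ?q - 1" using dist_le[OF wq hq lq] .
  moreover have "length ?q = Suc i + (length p - Suc j)" using ij by simp
  ultimately show False using l ij by linarith
qed

lemma geo_distinct_list: "geo S E p \<Longrightarrow> distinct p"
  using geo_distinct by (metis distinct_conv_nth nat_neq_iff)

lemma geo_walk: "geo S E p \<Longrightarrow> walk S E p" by (simp add: geo_def)

lemma walk_edge: "walk S E p \<Longrightarrow> Suc i < length p \<Longrightarrow> E (p!i) (p!Suc i)"
  by (simp add: walk_def)

lemma geo_adj_iff:
  assumes g: "geo S E p" and sym: "\<And>x y. E x y \<Longrightarrow> E y x" and irr: "\<And>x. \<not> E x x"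
    and ij: "i < length p" "j < length p"
  shows "E (p!i) (p!j) \<longleftrightarrow> (j = Suc i \<or> i = Suc j)"
proof
  assume e: "E (p!i) (p!j)"
  show "j = Suc i \<or> i = Suc j"
  proof (rule ccontr)
    assume n: "\<not> (j = Suc i \<or> i = Suc j)"
    show False
    proof (cases "i = j")
      case True then show False using e irr by simp
    next
      case False
      then consider "Suc i < j" | "Suc j < i" using n by linarith
      then show False
      proof cases
        case 1 then show False using geo_noshort[OF g 1 ij(2)] e by simp
      next
        case 2 then show False using geo_noshort[OF g 2 ij(1)] e sym by blast
      qed
    qed
  qed
next
  assume "j = Suc i \<or> i = Suc j"
  then show "E (p!i) (p!j)"
  proof
    assume "j = Suc i" then show ?thesis using walk_edge[OF geo_walk[OF g]] ij by simp
  next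
    assume "i = Suc j" then show ?thesis using walk_edge[OF geo_walk[OF g]] ij sym by blast
  qed
qed

lemma Suc_mod_less: "k < m \<Longrightarrow> Suc k mod m = (if Suc k = m then 0 else Suc k)"
  by auto

lemma cyc0:
  assumes ch: "chordal V E" and sym: "\<And>x y. E x y \<Longrightarrow> E y x" and irr: "\<And>x. \<not> E x x"
    and dp: "distinct p" and pV: "set p \<subseteq> V" and len: "3 \<le> length p"
    and adj: "\<And>i j. i < length p \<Longrightarrow> j < length p \<Longrightarrow> E (p!i) (p!j) \<longleftrightarrow> (j = Suc i \<or> i = Suc j)"
    and aV: "a \<in> V" and ap: "a \<notin> set p"
    and a0: "E a (p!0)" and al: "E a (p!(length p - 1))"
    and ai: "\<And>i. 0 < i \<Longrightarrow> Suc i < length p \<Longrightarrow> \<not> E a (p!i)"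
  shows False
proof -
  let ?cs = "a # p"
  let ?m = "length ?cs"
  define n where "n = length p"
  have m: "?m = Suc n" by (simp add: n_def)
  have aiff: "\<And>j. j < n \<Longrightarrow> E a (p!j) \<longleftrightarrow> (j = 0 \<or> Suc j = n)"
  proof -
    fix j assume j: "j < n"
    show "E a (p!j) \<longleftrightarrow> (j = 0 \<or> Suc j = n)"
    proof (cases "j = 0 \<or> Suc j = n")
      case True
      then show ?thesis using a0 al n_def by (metis diff_Suc_1)
    next
      case False
      then have "0 < j" "Suc j < length p" using j n_def by auto
      then show ?thesis using ai False by blast
    qed
  qed
  have ind: "induced_cycle V E ?cs"
    unfolding induced_cycle_def
  proof (intro conjI allI impI)
    show "distinct ?cs" using dp ap by simp
    show "set ?cs \<subseteq> V" using pV aV by simp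
  next
    fix i j assume i: "i < ?m" and j: "j < ?m"
    show "E (?cs ! i) (?cs ! j) \<longleftrightarrow> (j = Suc i mod ?m \<or> i = Suc j mod ?m)"
    proof (cases i)
      case 0
      note i0 = 0
      show ?thesis
      proof (cases j)
        case 0 then show ?thesis using i0 irr len by (cases p) auto
      next
        case (Suc j')
        have j': "j' < n" using j Suc m by simp
        have "E (?cs ! i) (?cs ! j) \<longleftrightarrow> (j' = 0 \<or> Suc j' = n)" using aiff[OF j'] i0 Suc by simp
        moreover have "(j = Suc i mod ?m \<or> i = Suc j mod ?m) \<longleftrightarrow> (j' = 0 \<or> Suc j' = n)"
          using i0 Suc j' m len n_def by (auto simp: Suc_mod_less)
        ultimately show ?thesis by simp
      qed
    next
      case (Suc i')
      note iS = Suc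
      have i': "i' < n" using i Suc m by simp
      show ?thesis
      proof (cases j)
        case 0
        have "E (?cs ! i) (?cs ! j) \<longleftrightarrow> (i' = 0 \<or> Suc i' = n)" using aiff[OF i'] iS 0 sym by auto
        moreover have "(j = Suc i mod ?m \<or> i = Suc j mod ?m) \<longleftrightarrow> (i' = 0 \<or> Suc i' = n)"
          using iS 0 i' m len n_def by (auto simp: Suc_mod_less)
        ultimately show ?thesis by simp
      next
        case (Suc j')
        have j': "j' < n" using j Suc m by simp
        have "E (?cs ! i) (?cs ! j) \<longleftrightarrow> (j' = Suc i' \<or> i' = Suc j')"
          using adj[of i' j'] i' j' iS Suc n_def by simp
        moreover have "(j = Suc i mod ?m \<or> i = Suc j mod ?m) \<longleftrightarrow> (j' = Suc i' \<or> i' = Suc j')"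
          using iS Suc i' j' m by (auto simp: Suc_mod_less)
        ultimately show ?thesis by simp
      qed
    qed
  qed
  moreover have "4 \<le> length ?cs" using len by simp
  ultimately show False using ch unfolding chordal_def by blast
qed

lemma reach_mono: "reach S E x y \<Longrightarrow> S \<subseteq> T \<Longrightarrow> reach T E x y"
proof -
  assume r: "reach S E x y" and st: "S \<subseteq> T"
  from r obtain p where p: "walk S E p" "hd p = x" "last p = y" by (auto simp: reach_def)
  have "set p \<subseteq> T" using p(1) st by (auto simp: walk_def)
  then have "walk T E p" using walk_mono[OF p(1)] by blast
  then show ?thesis using p unfolding reach_def by blast
qed

lemma walk_reach_set:
  assumes w: "walk S E p" and h: "\<And>z. reach S E (hd p) z \<Longrightarrow> z \<in> C"
  shows "set p \<subseteq> C"
proof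
  fix z assume "z \<in> set p"
  then obtain k where k: "k < length p" "p ! k = z" by (auto simp: in_set_conv_nth)
  have "p \<noteq> []" using w walk_nonempty by auto
  then have "hd p = p ! 0" by (simp add: hd_conv_nth)
  then have "reach S E (hd p) z" using reach_sub[OF w _ k(1), of 0] k \<open>p \<noteq> []\<close> by simp
  then show "z \<in> C" using h by blast
qed

lemma two_paths:
  assumes ch: "chordal V E" and sym: "\<And>x y. E x y \<Longrightarrow> E y x" and irr: "\<And>x. \<not> E x x"
    and CV: "C \<subseteq> V" and aV: "a \<in> V" and aC: "a \<notin> C" and anC: "\<And>z. z \<in> C \<Longrightarrow> \<not> E a z"
    and xV: "x \<in> V" and yV: "y \<in> V" and xy: "x \<noteq> y" and nxy: "\<not> E x y"
    and ax: "E a x" and ay: "E a y" and xC: "x \<notin> C" and yC: "y \<notin> C"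
    and r: "reach (C \<union> {x, y}) E x y"
  shows False
proof -
  let ?S = "C \<union> {x, y}"
  obtain p where g: "geo ?S E p" and hp: "hd p = x" and lp: "last p = y"
    using geo_exists[OF r] by blast
  have w: "walk ?S E p" using g by (rule geo_walk)
  have ne: "p \<noteq> []" using w walk_nonempty by auto
  have p0: "p ! 0 = x" using hp ne by (simp add: hd_conv_nth)
  have pl: "p ! (length p - 1) = y" using lp ne by (simp add: last_conv_nth)
  have dp: "distinct p" using g by (rule geo_distinct_list)
  have l2: "2 \<le> length p"
  proof (rule ccontr)
    assume "\<not> 2 \<le> length p"
    moreover have "length p \<noteq> 0" using ne by simp
    ultimately have "length p = 1" by linarith
    then show False using p0 pl xy by simp
  qed
  have l3: "3 \<le> length p"
  proof (rule ccontr)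
    assume "\<not> 3 \<le> length p"
    then have "length p = 2" using l2 by simp
    then have "E (p!0) (p!1)" using walk_edge[OF w, of 0] by simp
    then show False using p0 pl nxy \<open>length p = 2\<close> by simp
  qed
  have pS: "set p \<subseteq> ?S" using w by (simp add: walk_def)
  have pV: "set p \<subseteq> V" using pS CV xV yV by auto
  have inner: "\<And>i. 0 < i \<Longrightarrow> Suc i < length p \<Longrightarrow> p ! i \<in> C"
  proof -
    fix i assume i: "0 < i" "Suc i < length p"
    have "p ! i \<noteq> p ! 0" using nth_eq_iff_index_eq[OF dp, of i 0] i ne by simp
    moreover have "p ! i \<noteq> p ! (length p - 1)" using nth_eq_iff_index_eq[OF dp, of i "length p - 1"] i by simp
    moreover have "p ! i \<in> set p" using i by simp
    then have "p ! i \<in> ?S" using pS by blast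
    ultimately show "p ! i \<in> C" using p0 pl by auto
  qed
  have ap: "a \<notin> set p"
  proof
    assume "a \<in> set p"
    then have "a \<in> ?S" using pS by auto
    then show False using aC ax ay irr by auto
  qed
  show False
  proof (rule cyc0[OF ch sym irr dp pV l3 _ aV ap])
    show "\<And>i j. i < length p \<Longrightarrow> j < length p \<Longrightarrow> E (p!i) (p!j) \<longleftrightarrow> (j = Suc i \<or> i = Suc j)"
      using geo_adj_iff[OF g sym irr] by blast
    show "E a (p!0)" using p0 ax by simp
    show "E a (p!(length p - 1))" using pl ay by simp
    show "\<And>i. 0 < i \<Longrightarrow> Suc i < length p \<Longrightarrow> \<not> E a (p!i)" using inner anC by blast
  qed
qed

definition clique :: "'a set \<Rightarrow> ('a \<Rightarrow> 'a \<Rightarrow> bool) \<Rightarrow> 'a set \<Rightarrow> bool" where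
  "clique V E K \<longleftrightarrow> K \<subseteq> V \<and> (\<forall>x\<in>K. \<forall>y\<in>K. x \<noteq> y \<longrightarrow> E x y)"

definition simplicial :: "'a set \<Rightarrow> ('a \<Rightarrow> 'a \<Rightarrow> bool) \<Rightarrow> 'a \<Rightarrow> bool" where
  "simplicial V E s \<longleftrightarrow> s \<in> V \<and> (\<forall>x\<in>V. \<forall>y\<in>V. E s x \<longrightarrow> E s y \<longrightarrow> x \<noteq> y \<longrightarrow> E x y)"

lemma chordal_subset: "chordal V E \<Longrightarrow> W \<subseteq> V \<Longrightarrow> chordal W E"
  unfolding chordal_def induced_cycle_def by blast

lemma comp_clique:
  assumes ch: "chordal V E" and sym: "\<And>x y. E x y \<Longrightarrow> E y x" and irr: "\<And>x. \<not> E x x"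
    and aV: "a \<in> V"
    and W: "W = {z\<in>V. z \<noteq> a \<and> \<not> E a z}"
    and C: "C = {z. reach W E c0 z}"
    and N: "N = {y\<in>V. y \<notin> C \<and> (\<exists>z\<in>C. E y z)}"
  shows "C \<subseteq> W" "\<And>z y. z \<in> C \<Longrightarrow> y \<in> W \<Longrightarrow> E z y \<Longrightarrow> y \<in> C"
    "N \<subseteq> {y. E a y}" "clique V E N"
proof -
  have Wm: "\<And>z. z \<in> W \<longleftrightarrow> z \<in> V \<and> z \<noteq> a \<and> \<not> E a z" using W by simp
  have Cm: "\<And>z. z \<in> C \<longleftrightarrow> reach W E c0 z" using C by simp
  have Nm: "\<And>y. y \<in> N \<longleftrightarrow> y \<in> V \<and> y \<notin> C \<and> (\<exists>z\<in>C. E y z)" using N by simp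
  show CW: "C \<subseteq> W"
  proof
    fix z assume "z \<in> C"
    then have "reach W E c0 z" using Cm by simp
    then show "z \<in> W" by (rule conjunct2[OF reach_in])
  qed
  show ext: "\<And>z y. z \<in> C \<Longrightarrow> y \<in> W \<Longrightarrow> E z y \<Longrightarrow> y \<in> C"
  proof -
    fix z y assume z: "z \<in> C" and y: "y \<in> W" and e: "E z y"
    have "z \<in> W" using z CW by blast
    then have zy: "reach W E z y" using y e by (rule reach_edge)
    have cz: "reach W E c0 z" using z using Cm by simp
    have "reach W E c0 y" using reach_trans[OF cz zy] .
    then show "y \<in> C" using Cm by simp
  qed
  show NA: "N \<subseteq> {y. E a y}"
  proof
    fix y assume y: "y \<in> N"
    then obtain z where z: "z \<in> C" "E y z" and yV: "y \<in> V" and yC: "y \<notin> C" using Nm by blast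
    have "y \<notin> W"
    proof
      assume "y \<in> W" then show False using ext[OF z(1) _ sym[OF z(2)]] yC by blast
    qed
    then have "y = a \<or> E a y" using yV Wm by blast
    moreover have "y \<noteq> a" using z CW Wm by blast
    ultimately show "y \<in> {y. E a y}" by blast
  qed
  have CV: "C \<subseteq> V" using CW Wm by blast
  have aC: "a \<notin> C" using CW Wm by blast
  have anC: "\<And>z. z \<in> C \<Longrightarrow> \<not> E a z" using CW Wm by blast
  have creach: "\<And>u v. u \<in> C \<Longrightarrow> v \<in> C \<Longrightarrow> reach C E u v"
  proof -
    fix u v assume u: "u \<in> C" and v: "v \<in> C"
    have cu: "reach W E c0 u" and cv: "reach W E c0 v" using u v Cm by auto
    have r: "reach W E u v" using reach_trans[OF reach_sym[OF cu sym] cv] .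
    then obtain p where p: "walk W E p" "hd p = u" "last p = v" by (auto simp: reach_def)
    have "set p \<subseteq> C"
    proof (rule walk_reach_set[OF p(1)])
      fix z assume "reach W E (hd p) z"
      then have "reach W E c0 z" using p(2) reach_trans[OF cu] by simp
      then show "z \<in> C" using Cm by blast
    qed
    then have "walk C E p" using walk_mono[OF p(1)] by blast
    then show "reach C E u v" using p unfolding reach_def by blast
  qed
  show "clique V E N"
    unfolding clique_def
  proof (intro conjI ballI impI)
    show "N \<subseteq> V" using Nm by blast
  next
    fix x y assume x: "x \<in> N" and y: "y \<in> N" and xy: "x \<noteq> y"
    show "E x y"
    proof (rule ccontr)
      assume nxy: "\<not> E x y"
      obtain x' where x': "x' \<in> C" "E x x'" using x N by blast
      obtain y' where y': "y' \<in> C" "E y y'" using y N by blast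
      have xV: "x \<in> V" and yV: "y \<in> V" and xC: "x \<notin> C" and yC: "y \<notin> C" using x y Nm by auto
      let ?S = "C \<union> {x, y}"
      have r1: "reach ?S E x x'" using x' xV CV by (intro reach_edge) auto
      have r2: "reach ?S E x' y'" using creach[OF x'(1) y'(1)] by (rule reach_mono) blast
      have r3: "reach ?S E y' y" using y' yV CV sym by (intro reach_edge) auto
      have "reach ?S E x y" using reach_trans[OF reach_trans[OF r1 r2] r3] .
      moreover have "E a x" "E a y" using NA x y by auto
      ultimately show False
        using two_paths[OF ch sym irr CV aV aC anC xV yV xy nxy _ _ xC yC] by blast
    qed
  qed
qed

lemma simplicial_exists:
  assumes sym: "\<And>x y. E x y \<Longrightarrow> E y x" and irr: "\<And>x. \<not> E x x"
  shows "finite V \<Longrightarrow> chordal V E \<Longrightarrow> clique V E K \<Longrightarrow> v \<in> V \<Longrightarrow> v \<notin> K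
    \<Longrightarrow> \<exists>s. simplicial V E s \<and> s \<notin> K"
proof (induction "card V" arbitrary: V K v rule: less_induct)
  case less
  note IH = less.hyps
  have fin: "finite V" and ch: "chordal V E" and cl: "clique V E K" and vV: "v \<in> V" and vK: "v \<notin> K"
    using less.prems by auto
  show ?case
  proof (cases "\<forall>x\<in>V. \<forall>y\<in>V. x \<noteq> y \<longrightarrow> E x y")
    case True
    then have "simplicial V E v" using vV unfolding simplicial_def by blast
    then show ?thesis using vK by blast
  next
    case False
    then obtain x0 y0 where x0: "x0 \<in> V" "y0 \<in> V" "x0 \<noteq> y0" "\<not> E x0 y0" by blast
    show ?thesis
    proof (cases "\<exists>a\<in>K. \<forall>y\<in>V. y \<noteq> a \<longrightarrow> E a y")
      case True
      then obtain a where aK: "a \<in> K" and univ: "\<And>y. y \<in> V \<Longrightarrow> y \<noteq> a \<Longrightarrow> E a y" by blast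
      have aV: "a \<in> V" using aK cl by (auto simp: clique_def)
      let ?V = "V - {a}" and ?K = "K - {a}"
      have "card ?V < card V" using fin aV by (rule card_Diff1_less)
      moreover have "finite ?V" using fin by simp
      moreover have "chordal ?V E" using chordal_subset[OF ch] by blast
      moreover have "clique ?V E ?K" using cl by (auto simp: clique_def)
      moreover have "v \<in> ?V" "v \<notin> ?K" using vV vK aK by auto
      ultimately obtain s where s: "simplicial ?V E s" "s \<notin> ?K" using IH by meson
      have sa: "s \<noteq> a" "s \<in> V" using s(1) by (auto simp: simplicial_def)
      have "simplicial V E s"
        unfolding simplicial_def
      proof (intro conjI ballI impI)
        show "s \<in> V" using sa by simp
      next
        fix x y assume x: "x \<in> V" and y: "y \<in> V" and ex: "E s x" and ey: "E s y" and xy: "x \<noteq> y"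
        show "E x y"
        proof (cases "x = a")
          case True then show ?thesis using univ y xy by blast
        next
          case xa: False
          show ?thesis
          proof (cases "y = a")
            case True then show ?thesis using sym[OF univ[OF x xa]] by simp
          next
            case False
            then show ?thesis using s(1) x y xa ex ey xy unfolding simplicial_def by blast
          qed
        qed
      qed
      moreover have "s \<notin> K" using s(2) sa by blast
      ultimately show ?thesis by blast
    next
      case nouniv: False
      obtain a where aV: "a \<in> V" and anu: "\<exists>y\<in>V. y \<noteq> a \<and> \<not> E a y" and Ka: "K \<subseteq> insert a {y. E a y}"
      proof (cases "K = {}")
        case True
        have "\<exists>y\<in>V. y \<noteq> x0 \<and> \<not> E x0 y" using x0 by metis
        moreover have "K \<subseteq> insert x0 {y. E x0 y}" using True by simp
        ultimately show ?thesis using that[of x0] x0(1) by blast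
      next
        case False
        then obtain a where aK: "a \<in> K" by blast
        have "a \<in> V" using aK cl by (auto simp: clique_def)
        moreover have "\<exists>y\<in>V. y \<noteq> a \<and> \<not> E a y" using nouniv aK by blast
        moreover have "K \<subseteq> insert a {y. E a y}" using cl aK by (auto simp: clique_def)
        ultimately show ?thesis using that by blast
      qed
      then obtain c0 where c0: "c0 \<in> V" "c0 \<noteq> a" "\<not> E a c0" by blast
      define W where "W = {z\<in>V. z \<noteq> a \<and> \<not> E a z}"
      define C where "C = {z. reach W E c0 z}"
      define N where "N = {y\<in>V. y \<notin> C \<and> (\<exists>z\<in>C. E y z)}"
      note cc = comp_clique[OF ch sym irr aV W_def C_def N_def]
      have Wm: "\<And>z. z \<in> W \<longleftrightarrow> z \<in> V \<and> z \<noteq> a \<and> \<not> E a z" using W_def by simp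
      have Nm: "\<And>y. y \<in> N \<longleftrightarrow> y \<in> V \<and> y \<notin> C \<and> (\<exists>z\<in>C. E y z)" using N_def by simp
      have c0W: "c0 \<in> W" using c0 Wm by blast
      have c0C: "c0 \<in> C" using reach_refl[OF c0W] C_def by simp
      let ?V = "C \<union> N"
      have VV: "?V \<subseteq> V - {a}"
      proof
        fix z assume z: "z \<in> ?V"
        show "z \<in> V - {a}"
        proof (cases "z \<in> C")
          case True then show ?thesis using cc(1) Wm by blast
        next
          case False
          then have "z \<in> N" using z by blast
          then have "z \<in> V" "E a z" using Nm cc(3) by blast+
          then show ?thesis using irr by blast
        qed
      qed
      have c1: "card ?V < card V"
      proof -
        have "?V \<subset> V" using VV aV by blast
        then show ?thesis using fin by (simp add: psubset_card_mono)
      qed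
      have f1: "finite ?V" using VV fin by (meson finite_Diff finite_subset)
      have ch1: "chordal ?V E" using chordal_subset[OF ch] VV by blast
      have cl1: "clique ?V E N" using cc(4) by (auto simp: clique_def)
      have c0V: "c0 \<in> ?V" and c0N: "c0 \<notin> N" using c0C Nm by auto
      obtain s where s: "simplicial ?V E s" "s \<notin> N" using IH[OF c1 f1 ch1 cl1 c0V c0N] by blast
      have sC: "s \<in> C" using s by (auto simp: simplicial_def)
      have sW: "s \<in> W" using sC cc(1) by blast
      have "simplicial V E s"
        unfolding simplicial_def
      proof (intro conjI ballI impI)
        show "s \<in> V" using sW Wm by blast
      next
        fix x y assume x: "x \<in> V" and y: "y \<in> V" and ex: "E s x" and ey: "E s y" and xy: "x \<noteq> y"
        have inV: "\<And>z. z \<in> V \<Longrightarrow> E s z \<Longrightarrow> z \<in> ?V"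
        proof -
          fix z assume z: "z \<in> V" "E s z"
          show "z \<in> ?V"
          proof (cases "z \<in> C")
            case True then show ?thesis by blast
          next
            case False
            moreover have "E z s" using sym[OF z(2)] .
            ultimately have "z \<in> N" using Nm z(1) sC by blast
            then show ?thesis by blast
          qed
        qed
        show "E x y" using s(1) inV[OF x ex] inV[OF y ey] ex ey xy unfolding simplicial_def by blast
      qed
      moreover have "s \<notin> K" using sW Wm Ka by blast
      ultimately show ?thesis by blast
    qed
  qed
qed

definition conn :: "'a set \<Rightarrow> ('a \<Rightarrow> 'a \<Rightarrow> bool) \<Rightarrow> bool" where
  "conn S E \<longleftrightarrow> (\<forall>a\<in>S. \<forall>b\<in>S. reach S E a b)"

definition touch :: "('a \<Rightarrow> 'a \<Rightarrow> bool) \<Rightarrow> 'a set \<Rightarrow> 'a set \<Rightarrow> bool" where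
  "touch E A B \<longleftrightarrow> (\<exists>a\<in>A. \<exists>b\<in>B. a = b \<or> E a b)"

lemma conn_nbr:
  assumes c: "conn S E" and sS: "s \<in> S" and bS: "b \<in> S" and bs: "b \<noteq> s" and irr: "\<And>x. \<not> E x x"
  shows "\<exists>a\<in>S - {s}. E s a"
proof -
  have "reach S E s b" using c sS bS by (simp add: conn_def)
  then obtain p where p: "walk S E p" "hd p = s" "last p = b" by (auto simp: reach_def)
  have ne: "p \<noteq> []" using p(1) walk_nonempty by auto
  have l2: "Suc 0 < length p"
  proof (rule ccontr)
    assume "\<not> Suc 0 < length p"
    then have "length p = 1" using ne by (cases p) auto
    then have "hd p = last p" by (cases p) auto
    then show False using p bs by simp
  qed
  have e: "E (p!0) (p!1)" using walk_edge[OF p(1) l2] by simp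
  have p0: "p!0 = s" using p(2) ne by (simp add: hd_conv_nth)
  have "p!1 \<in> set p" using l2 by simp
  then have "p!1 \<in> S" using p(1) by (auto simp: walk_def)
  moreover have "p!1 \<noteq> s" using e p0 irr by auto
  ultimately show ?thesis using e p0 by blast
qed

lemma conn_remove_simplicial:
  assumes c: "conn S E" and sV: "S \<subseteq> V" and simp: "simplicial V E s"
    and sym: "\<And>x y. E x y \<Longrightarrow> E y x" and irr: "\<And>x. \<not> E x x"
  shows "conn (S - {s}) E"
  unfolding conn_def
proof (intro ballI)
  fix a b assume a: "a \<in> S - {s}" and b: "b \<in> S - {s}"
  have r: "reach S E a b" using c a b by (simp add: conn_def)
  obtain p where g: "geo S E p" and hp: "hd p = a" and lp: "last p = b" using geo_exists[OF r] by blast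
  have w: "walk S E p" using g by (rule geo_walk)
  have ne: "p \<noteq> []" using w walk_nonempty by auto
  have ns: "s \<notin> set p"
  proof
    assume "s \<in> set p"
    then obtain i where i: "i < length p" "p ! i = s" by (auto simp: in_set_conv_nth)
    have i0: "i \<noteq> 0"
    proof
      assume "i = 0"
      then have "hd p = s" using i ne by (simp add: hd_conv_nth)
      then show False using hp a by simp
    qed
    have il: "Suc i \<noteq> length p"
    proof
      assume "Suc i = length p"
      then have "last p = p ! i" by (rule last_nth_len)
      then show False using i lp b by simp
    qed
    then have il': "Suc i < length p" using i by simp
    obtain j where j: "i = Suc j" using i0 by (cases i) auto
    have e1: "E (p!j) (p!i)" using walk_edge[OF w, of j] j i by simp
    have e2: "E (p!i) (p!Suc i)" using walk_edge[OF w il'] .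
    have pS: "set p \<subseteq> S" using w by (simp add: walk_def)
    have "p!j \<in> set p" "p!Suc i \<in> set p" using i il' j by auto
    then have jV: "p!j \<in> V" and kV: "p!Suc i \<in> V" using pS sV by auto
    have "p!j \<noteq> p!Suc i" using geo_distinct[OF g _ il'] j by simp
    then have "E (p!j) (p!Suc i)"
      using simp jV kV sym[OF e1] e2 i(2) unfolding simplicial_def by blast
    moreover have "\<not> E (p!j) (p!Suc i)" using geo_noshort[OF g _ il'] j by simp
    ultimately show False by simp
  qed
  have "set p \<subseteq> S - {s}" using ns w by (auto simp: walk_def)
  then have "walk (S - {s}) E p" using walk_mono[OF w] by blast
  then show "reach (S - {s}) E a b" using hp lp unfolding reach_def by blast
qed

lemma helly_clique:
  assumes sym: "\<And>x y. E x y \<Longrightarrow> E y x" and irr: "\<And>x. \<not> E x x"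
  shows "finite V \<Longrightarrow> chordal V E \<Longrightarrow> (\<forall>S\<in>F. S \<noteq> {} \<and> S \<subseteq> V \<and> conn S E)
    \<Longrightarrow> (\<forall>A\<in>F. \<forall>B\<in>F. touch E A B) \<Longrightarrow> \<exists>Q. clique V E Q \<and> (\<forall>S\<in>F. Q \<inter> S \<noteq> {})"
proof (induction "card V" arbitrary: V F rule: less_induct)
  case less
  note IH = less.hyps
  have fin: "finite V" and ch: "chordal V E" and FS: "\<forall>S\<in>F. S \<noteq> {} \<and> S \<subseteq> V \<and> conn S E"
    and FT: "\<forall>A\<in>F. \<forall>B\<in>F. touch E A B" using less.prems by auto
  show ?case
  proof (cases "V = {}")
    case True
    then have "F = {}" using FS by blast
    then show ?thesis by (auto simp: clique_def)
  next
    case False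
    then obtain v where vV: "v \<in> V" by blast
    have "clique V E {}" by (simp add: clique_def)
    then obtain s where s: "simplicial V E s" using simplicial_exists[OF sym irr fin ch _ vV] by blast
    have sV: "s \<in> V" using s by (simp add: simplicial_def)
    show ?thesis
    proof (cases "{s} \<in> F")
      case True
      let ?Q = "insert s {y\<in>V. E s y}"
      have "clique V E ?Q"
        unfolding clique_def
      proof (intro conjI ballI impI)
        show "?Q \<subseteq> V" using sV by blast
      next
        fix x y assume x: "x \<in> ?Q" and y: "y \<in> ?Q" and xy: "x \<noteq> y"
        show "E x y"
        proof (cases "x = s")
          case True then show ?thesis using y xy by blast
        next
          case xs: False
          show ?thesis
          proof (cases "y = s")
            case True
            have "E s x" using x xs by blast
            then show ?thesis using True sym by blast
          next
            case False then show ?thesis using s x y xs xy unfolding simplicial_def by blast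
          qed
        qed
      qed
      moreover have "\<forall>S\<in>F. ?Q \<inter> S \<noteq> {}"
      proof
        fix S assume S: "S \<in> F"
        then have "touch E {s} S" using FT True by blast
        then obtain b where b: "b \<in> S" "s = b \<or> E s b" by (auto simp: touch_def)
        have "b \<in> V" using b S FS by blast
        then have "b \<in> ?Q" using b by blast
        then show "?Q \<inter> S \<noteq> {}" using b by blast
      qed
      ultimately show ?thesis by blast
    next
      case notin: False
      let ?V = "V - {s}"
      let ?F = "(\<lambda>S. S - {s}) ` F"
      have c1: "card ?V < card V" using fin sV by (rule card_Diff1_less)
      have f1: "finite ?V" using fin by simp
      have ch1: "chordal ?V E" using chordal_subset[OF ch] by blast
      have nb: "\<And>A. A \<in> F \<Longrightarrow> s \<in> A \<Longrightarrow> \<exists>a\<in>A - {s}. E s a"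
      proof -
        fix A assume A: "A \<in> F" and sA: "s \<in> A"
        have "A \<noteq> {s}" using A notin by blast
        then obtain b where b: "b \<in> A" "b \<noteq> s" using sA by blast
        have "conn A E" using A FS by blast
        then show "\<exists>a\<in>A - {s}. E s a" using sA b by (rule conn_nbr) (rule irr)
      qed
      have FS1: "\<forall>S\<in>?F. S \<noteq> {} \<and> S \<subseteq> ?V \<and> conn S E"
      proof
        fix S' assume "S' \<in> ?F"
        then obtain S where S: "S \<in> F" and S': "S' = S - {s}" by blast
        have "S \<noteq> {}" "S \<subseteq> V" "conn S E" using S FS by auto
        moreover have "S \<noteq> {s}" using S notin by blast
        moreover have "conn (S - {s}) E"
        proof (rule conn_remove_simplicial)
          show "conn S E" "S \<subseteq> V" using S FS by auto
          show "simplicial V E s" by (rule s)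
          show "\<And>x y. E x y \<Longrightarrow> E y x" by (rule sym)
          show "\<And>x. \<not> E x x" by (rule irr)
        qed
        ultimately show "S' \<noteq> {} \<and> S' \<subseteq> ?V \<and> conn S' E"
          using S' by blast
      qed
      have FT1: "\<forall>A\<in>?F. \<forall>B\<in>?F. touch E A B"
      proof (intro ballI)
        fix A' B' assume "A' \<in> ?F" "B' \<in> ?F"
        then obtain A B where A: "A \<in> F" "A' = A - {s}" and B: "B \<in> F" "B' = B - {s}" by blast
        have "touch E A B" using FT A(1) B(1) by blast
        then obtain a b where ab: "a \<in> A" "b \<in> B" "a = b \<or> E a b" unfolding touch_def by blast
        have aV: "a \<in> V" and bV: "b \<in> V" using ab A B FS by auto
        show "touch E A' B'"
        proof (cases "a = s")
          case as: True
          obtain a' where a': "a' \<in> A - {s}" "E s a'" using nb[OF A(1)] ab(1) as by blast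
          have a'V: "a' \<in> V" using a' A FS by blast
          show ?thesis
          proof (cases "b = s")
            case True
            obtain b' where b': "b' \<in> B - {s}" "E s b'" using nb[OF B(1)] ab(2) True by blast
            have b'V: "b' \<in> V" using b' B FS by blast
            have "a' = b' \<or> E a' b'" using s a'V b'V a'(2) b'(2) unfolding simplicial_def by blast
            then show ?thesis using a' b' A B unfolding touch_def by blast
          next
            case False
            then have "E s b" using ab(3) as by blast
            then have "a' = b \<or> E a' b" using s a'V bV a'(2) unfolding simplicial_def by blast
            then show ?thesis using a' ab(2) False A B unfolding touch_def by blast
          qed
        next
          case anots: False
          show ?thesis
          proof (cases "b = s")
            case True
            obtain b' where b': "b' \<in> B - {s}" "E s b'" using nb[OF B(1)] ab(2) True by blast
            have b'V: "b' \<in> V" using b' B FS by blast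
            have "E a s" using ab(3) True anots by blast
            then have "E s a" by (rule sym)
            then have "a = b' \<or> E a b'" using s aV b'V b'(2) unfolding simplicial_def by blast
            then show ?thesis using b' ab(1) anots A B unfolding touch_def by blast
          next
            case False
            then show ?thesis using ab anots A B unfolding touch_def by blast
          qed
        qed
      qed
      obtain Q where Q: "clique ?V E Q" "\<forall>S\<in>?F. Q \<inter> S \<noteq> {}"
        using IH[OF c1 f1 ch1 FS1 FT1] by blast
      have "clique V E Q" using Q(1) unfolding clique_def by blast
      moreover have "\<forall>S\<in>F. Q \<inter> S \<noteq> {}"
      proof
        fix S assume "S \<in> F"
        then have "S - {s} \<in> ?F" by (rule imageI)
        with Q(2) have "Q \<inter> (S - {s}) \<noteq> {}" by (rule bspec)
        then show "Q \<inter> S \<noteq> {}" by blast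
      qed
      ultimately show ?thesis by blast
    qed
  qed
qed

definition ball :: "'a set \<Rightarrow> ('a \<Rightarrow> 'a \<Rightarrow> bool) \<Rightarrow> 'a \<Rightarrow> nat \<Rightarrow> 'a set" where
  "ball V E x r = {y\<in>V. dist V E x y \<le> r}"

lemma ecc_ge: "finite V \<Longrightarrow> y \<in> V \<Longrightarrow> dist V E x y \<le> ecc V E x"
  unfolding ecc_def by (rule Max_ge) auto

lemma ecc_le: "finite V \<Longrightarrow> V \<noteq> {} \<Longrightarrow> (\<And>y. y \<in> V \<Longrightarrow> dist V E x y \<le> k) \<Longrightarrow> ecc V E x \<le> k"
  unfolding ecc_def by (subst Max_le_iff) auto

lemma rad_le: "finite V \<Longrightarrow> x \<in> V \<Longrightarrow> rad V E \<le> ecc V E x"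
  unfolding rad_def by (rule Min_le) auto

lemma diam_ge: "finite V \<Longrightarrow> x \<in> V \<Longrightarrow> ecc V E x \<le> diam V E"
  unfolding diam_def by (rule Max_ge) auto

lemma center_ne: "finite V \<Longrightarrow> V \<noteq> {} \<Longrightarrow> \<exists>c\<in>V. ecc V E c = rad V E"
proof -
  assume "finite V" "V \<noteq> {}"
  then have "rad V E \<in> ecc V E ` V" unfolding rad_def by (intro Min_in) auto
  then show ?thesis by auto
qed

lemma ball_conn:
  assumes con: "\<And>x y. x \<in> V \<Longrightarrow> y \<in> V \<Longrightarrow> reach V E x y" and sym: "\<And>x y. E x y \<Longrightarrow> E y x"
    and xV: "x \<in> V"
  shows "conn (ball V E x r) E"
proof -
  let ?B = "ball V E x r"
  have rx: "\<And>y. y \<in> ?B \<Longrightarrow> reach ?B E x y"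
  proof -
    fix y assume y: "y \<in> ?B"
    then have yV: "y \<in> V" and dy: "dist V E x y \<le> r" by (auto simp: ball_def)
    obtain p where g: "geo V E p" and hp: "hd p = x" and lp: "last p = y"
      using geo_exists[OF con[OF xV yV]] by blast
    have w: "walk V E p" using g by (rule geo_walk)
    have ne: "p \<noteq> []" using w walk_nonempty by auto
    have lenp: "length p = Suc (dist V E x y)" using g hp lp by (simp add: geo_def)
    have "set p \<subseteq> ?B"
    proof
      fix z assume "z \<in> set p"
      then obtain i where i: "i < length p" "p ! i = z" by (auto simp: in_set_conv_nth)
      have "dist V E (p!0) (p!i) \<le> i - 0" using dist_sub[OF w _ i(1), of 0] by simp
      moreover have "p!0 = x" using hp ne by (simp add: hd_conv_nth)
      ultimately have "dist V E x z \<le> r" using i lenp dy by simp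
      moreover have "z \<in> V" using w i by (auto simp: walk_def)
      ultimately show "z \<in> ?B" by (simp add: ball_def)
    qed
    then have "walk ?B E p" using walk_mono[OF w] by blast
    then show "reach ?B E x y" using hp lp unfolding reach_def by blast
  qed
  show ?thesis unfolding conn_def
  proof (intro ballI)
    fix a b assume a: "a \<in> ?B" and b: "b \<in> ?B"
    show "reach ?B E a b" using reach_trans[OF reach_sym[OF rx[OF a] sym] rx[OF b]] .
  qed
qed

lemma ball_touch:
  assumes con: "\<And>x y. x \<in> V \<Longrightarrow> y \<in> V \<Longrightarrow> reach V E x y" and sym: "\<And>x y. E x y \<Longrightarrow> E y x"
    and xV: "x \<in> V" and yV: "y \<in> V" and d: "dist V E x y \<le> a + b + 1"
  shows "touch E (ball V E x a) (ball V E y b)"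
proof -
  obtain p where g: "geo V E p" and hp: "hd p = x" and lp: "last p = y"
    using geo_exists[OF con[OF xV yV]] by blast
  have w: "walk V E p" using g by (rule geo_walk)
  have ne: "p \<noteq> []" using w walk_nonempty by auto
  define n where "n = dist V E x y"
  have lenp: "length p = Suc n" using g hp lp by (simp add: geo_def n_def)
  have p0: "p!0 = x" using hp ne by (simp add: hd_conv_nth)
  have pn: "p!n = y" using lp lenp last_nth_len[of n p] by simp
  have yy: "dist V E y y = 0" using yV by (rule dist_refl)
  have inV: "\<And>i. i < length p \<Longrightarrow> p!i \<in> V" using w by (auto simp: walk_def)
  show ?thesis
  proof (cases "n \<le> a")
    case True
    have "y \<in> ball V E x a" using True yV n_def by (simp add: ball_def)
    moreover have "y \<in> ball V E y b" using yy yV by (simp add: ball_def)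
    ultimately show ?thesis unfolding touch_def by blast
  next
    case False
    then have an: "a < n" by simp
    have d1: "dist V E x (p!a) \<le> a" using dist_sub[OF w _ , of 0 a] an lenp p0 by simp
    have d2: "dist V E (p!a) y \<le> n - a" using dist_sub[OF w, of a n] an lenp pn by simp
    have zB: "p!a \<in> ball V E x a" using d1 inV[of a] an lenp by (simp add: ball_def)
    show ?thesis
    proof (cases "n - a \<le> b")
      case True
      have "dist V E y (p!a) \<le> b"
        using d2 True dist_sym[OF con[OF inV[of a] yV] sym] an lenp by simp
      then have "p!a \<in> ball V E y b" using inV[of a] an lenp by (simp add: ball_def)
      then show ?thesis using zB unfolding touch_def by blast
    next
      case False
      have d3: "dist V E (p!Suc a) y \<le> n - Suc a" using dist_sub[OF w, of "Suc a" n] an lenp pn by simp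
      have "dist V E y (p!Suc a) \<le> b"
        using d3 False d n_def dist_sym[OF con[OF inV[of "Suc a"] yV] sym] an lenp by simp
      then have "p!Suc a \<in> ball V E y b" using inV[of "Suc a"] an lenp by (simp add: ball_def)
      moreover have "E (p!a) (p!Suc a)" using walk_edge[OF w, of a] an lenp by simp
      ultimately show ?thesis using zB unfolding touch_def by blast
    qed
  qed
qed

lemma touch_sym: "(\<And>x y. E x y \<Longrightarrow> E y x) \<Longrightarrow> touch E A B \<Longrightarrow> touch E B A"
  unfolding touch_def by metis

theorem proposition8:
  fixes V :: "'a set" and E :: "'a \<Rightarrow> 'a \<Rightarrow> bool"
  assumes "finite V" and "graph V E" and "connected_graph V E" and "chordal V E"
  shows "\<forall>u\<in>V. Min ((\<lambda>c. dist V E u c + ecc V E c) ` center V E) \<le> diam V E"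
proof
  fix u assume uV: "u \<in> V"
  have fin: "finite V" and ch: "chordal V E" using assms by auto
  have sym: "\<And>x y. E x y \<Longrightarrow> E y x" and irr: "\<And>x. \<not> E x x"
    using assms(2) by (auto simp: graph_def)
  have Vne: "V \<noteq> {}" using assms(3) by (simp add: connected_graph_def)
  have con: "\<And>x y. x \<in> V \<Longrightarrow> y \<in> V \<Longrightarrow> reach V E x y"
    using assms(3) by (auto simp: connected_graph_def reach_def)
  define r where "r = rad V E"
  define D where "D = diam V E"
  have finC: "finite (center V E)" using fin by (simp add: center_def)
  have Minle: "\<And>c. c \<in> center V E \<Longrightarrow> Min ((\<lambda>c. dist V E u c + ecc V E c) ` center V E) \<le> dist V E u c + ecc V E c"
    using finC by (intro Min_le) auto
  have dD: "\<And>x y. x \<in> V \<Longrightarrow> y \<in> V \<Longrightarrow> dist V E x y \<le> D"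
    using ecc_ge[OF fin] diam_ge[OF fin] D_def le_trans by metis
  obtain c0 where c0: "c0 \<in> V" "ecc V E c0 = r" using center_ne[OF fin Vne] r_def by blast
  have rD: "r \<le> D" using diam_ge[OF fin c0(1), of E] c0 D_def by simp
  show "Min ((\<lambda>c. dist V E u c + ecc V E c) ` center V E) \<le> diam V E"
  proof (cases "2 * r \<le> D")
    case True
    have c0C: "c0 \<in> center V E" using c0 r_def by (simp add: center_def)
    have "dist V E u c0 = dist V E c0 u" using dist_sym[OF con[OF c0(1) uV] sym] .
    also have "\<dots> \<le> r" using ecc_ge[OF fin uV, of E c0] c0 by simp
    finally have "dist V E u c0 + ecc V E c0 \<le> D" using True c0 by simp
    then show ?thesis using Minle[OF c0C] D_def by simp
  next
    case False
    then have r1: "1 \<le> r" and D2: "D + 1 \<le> 2 * r" by auto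
    define F where "F = insert (ball V E u (D - r)) ((\<lambda>x. ball V E x (r - 1)) ` V)"
    have FS: "\<forall>S\<in>F. S \<noteq> {} \<and> S \<subseteq> V \<and> conn S E"
    proof
      fix S assume "S \<in> F"
      then obtain x where x: "x \<in> V" and S: "S = ball V E u (D - r) \<or> S = ball V E x (r - 1)"
        using uV unfolding F_def by blast
      show "S \<noteq> {} \<and> S \<subseteq> V \<and> conn S E"
      proof (rule disjE[OF S])
        assume S: "S = ball V E u (D - r)"
        have "u \<in> S" using S uV dist_refl[of u V E, OF uV] by (simp add: ball_def)
        then show ?thesis using S ball_conn[OF con sym uV] by (auto simp: ball_def)
      next
        assume S: "S = ball V E x (r - 1)"
        have "x \<in> S" using S x dist_refl[of x V E, OF x] by (simp add: ball_def)
        then show ?thesis using S ball_conn[OF con sym x] by (auto simp: ball_def)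
      qed
    qed
    have FT: "\<forall>A\<in>F. \<forall>B\<in>F. touch E A B"
    proof (intro ballI)
      fix A B assume A: "A \<in> F" and B: "B \<in> F"
      have bb: "\<And>x y. x \<in> V \<Longrightarrow> y \<in> V \<Longrightarrow> touch E (ball V E x (r - 1)) (ball V E y (r - 1))"
      proof -
        fix x y assume x: "x \<in> V" and y: "y \<in> V"
        have "dist V E x y \<le> (r - 1) + (r - 1) + 1" using dD[OF x y] D2 r1 by linarith
        then show "touch E (ball V E x (r - 1)) (ball V E y (r - 1))" using ball_touch[of V E x y "r - 1" "r - 1"] con sym x y by blast
      qed
      have ub: "\<And>y. y \<in> V \<Longrightarrow> touch E (ball V E u (D - r)) (ball V E y (r - 1))"
      proof -
        fix y assume y: "y \<in> V"
        have "dist V E u y \<le> (D - r) + (r - 1) + 1" using dD[OF uV y] rD r1 by linarith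
        then show "touch E (ball V E u (D - r)) (ball V E y (r - 1))" using ball_touch[of V E u y "D - r" "r - 1"] con sym uV y by blast
      qed
      have uB: "u \<in> ball V E u (D - r)" using dist_refl[of u V E, OF uV] uV unfolding ball_def by simp
      have uu: "touch E (ball V E u (D - r)) (ball V E u (D - r))"
        using uB unfolding touch_def by blast
      show "touch E A B"
      proof (cases "A = ball V E u (D - r)")
        case Au: True
        show ?thesis
        proof (cases "B = ball V E u (D - r)")
          case True then show ?thesis using Au uu by simp
        next
          case False
          then obtain y where "y \<in> V" "B = ball V E y (r - 1)" using B unfolding F_def by blast
          then show ?thesis using Au ub by simp
        qed
      next
        case False
        then obtain x where x: "x \<in> V" "A = ball V E x (r - 1)" using A unfolding F_def by blast
        show ?thesis
        proof (cases "B = ball V E u (D - r)")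
          case True then show ?thesis using x ub[OF x(1)] touch_sym[OF sym] by simp
        next
          case False
          then obtain y where "y \<in> V" "B = ball V E y (r - 1)" using B unfolding F_def by blast
          then show ?thesis using x bb by simp
        qed
      qed
    qed
    obtain Q where Q: "clique V E Q" "\<forall>S\<in>F. Q \<inter> S \<noteq> {}"
      using helly_clique[OF sym irr fin ch FS FT] by blast
    have "ball V E u (D - r) \<in> F" unfolding F_def by simp
    then obtain z where zQ: "z \<in> Q" and zB: "z \<in> ball V E u (D - r)" using Q(2) by blast
    have zV: "z \<in> V" and dz: "dist V E u z \<le> D - r" using zB by (auto simp: ball_def)
    have ecz: "ecc V E z \<le> r"
    proof (rule ecc_le[OF fin Vne])
      fix x assume x: "x \<in> V"
      have "ball V E x (r - 1) \<in> F" using x unfolding F_def by simp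
      then obtain q where qQ: "q \<in> Q" and qB: "q \<in> ball V E x (r - 1)" using Q(2) by blast
      have qV: "q \<in> V" and dq: "dist V E x q \<le> r - 1" using qB by (auto simp: ball_def)
      have "dist V E z q \<le> 1"
      proof (cases "z = q")
        case True then show ?thesis using dist_refl[of z V E, OF zV] by simp
      next
        case False
        then have "E z q" using Q(1) zQ qQ by (auto simp: clique_def)
        then show ?thesis using zV qV by (rule dist_edge[rotated 2])
      qed
      moreover have "dist V E q x = dist V E x q" using dist_sym[OF con[OF x qV] sym] .
      moreover have "dist V E z x \<le> dist V E z q + dist V E q x"
        using dist_triangle[OF con[OF zV qV] con[OF qV x]] .
      ultimately show "dist V E z x \<le> r" using dq r1 by linarith
    qed
    have ecz2: "r \<le> ecc V E z" using rad_le[OF fin zV] r_def by simp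
    have zC: "z \<in> center V E" using zV ecz ecz2 r_def by (simp add: center_def)
    have "dist V E u z + ecc V E z \<le> D" using dz ecz rD by linarith
    then show ?thesis using Minle[OF zC] D_def by simp
  qed
qed

end
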